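(* Let $X$ be a real $n\times p$ matrix ($p<n$) of full column rank with rows $x_1^\top,\dots,x_n^\top$, let $f\in\mathbb{R}^p$ and let $k\in\{1,\dots,n\}$. Then the following are equivalent: (a) for every $e\in\mathbb{R}^n$ with $\|e\|_0\leq k$, $f$ is the unique solution of $\min_{g\in\mathbb{R}^p}\|Xf+e-Xg\|_1$; (b) $k\leq m(X)$.
   Context: $N=\{1,\dots,n\}$; $\|e\|_0$ is the number of nonzero components of $e$. For $k\in\{1,\dots,n\}$, the leverage constants of $X$ are $$c_k(X)=\min_{M\subset N,\ |M|=k}\ \min_{g\in\mathbb{R}^p,\ g\neq 0}\ \frac{\sum_{i\in N\setminus M}|x_i^\top g|}{\sum_{i\in N}|x_i^\top g|},$$ and $m(X)=\max\{k\in N : c_k(X)>1/2\}$. *)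

theory Defs
  imports "HOL-Analysis.Analysis"
begin

definition l0norm :: "real^'n \<Rightarrow> nat" where
  "l0norm e = card {i. e $ i \<noteq> 0}"

definition l1norm :: "real^'n \<Rightarrow> real" where
  "l1norm v = (\<Sum>i\<in>UNIV. \<bar>v $ i\<bar>)"

text \<open>Leverage constant c_k(X); the rows of X are X $ i, the index set N is UNIV.\<close>
definition leverage_const :: "real^'p^'n \<Rightarrow> nat \<Rightarrow> real" where
  "leverage_const X k =
     Min ((\<lambda>M. INF g \<in> {g :: real^'p. g \<noteq> 0}.
              (\<Sum>i\<in>UNIV - M. \<bar>(X $ i) \<bullet> g\<bar>) / (\<Sum>i\<in>UNIV. \<bar>(X $ i) \<bullet> g\<bar>))
          ` {M. card M = k})"

text \<open>m(X) = max{k in N : c_k(X) > 1/2}, with the convention max of the empty set = 0.\<close>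
definition mX :: "real^'p^'n \<Rightarrow> nat" where
  "mX X = (let S = {k. 1 \<le> k \<and> k \<le> CARD('n) \<and> leverage_const X k > 1/2}
           in if S = {} then 0 else Max S)"

end

theory Submission
  imports Defs
begin

lemma mv_comp: "(X *v g) $ i = (X $ i) \<bullet> (g::real^'p)"
  by (simp add: matrix_vector_mult_def inner_vec_def mult.commute)

lemma full_rank_pos:
  fixes X :: "real^'p^'n"
  assumes "rank X = CARD('p)" "g \<noteq> 0"
  shows "(\<Sum>i\<in>UNIV. \<bar>(X $ i) \<bullet> g\<bar>) > 0"
proof -
  have "inj ((*v) X)" using assms(1) full_rank_injective by blast
  hence "X *v g \<noteq> X *v 0" using assms(2) by (metis injD)
  hence "X *v g \<noteq> 0" by simp
  then obtain i where "(X *v g) $ i \<noteq> 0" by (metis vec_eq_iff zero_index)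
  hence "\<bar>(X $ i) \<bullet> g\<bar> > 0" by (simp add: mv_comp)
  moreover have "(\<Sum>j\<in>UNIV. \<bar>(X $ j) \<bullet> g\<bar>) \<ge> \<bar>(X $ i) \<bullet> g\<bar>"
    by (rule member_le_sum) auto
  ultimately show ?thesis by linarith
qed

definition Pk :: "real^'p^'n \<Rightarrow> nat \<Rightarrow> bool" where
  "Pk X k = (\<forall>M. card M = k \<longrightarrow> (\<forall>g::real^'p. g \<noteq> 0 \<longrightarrow>
      (\<Sum>i\<in>M. \<bar>(X $ i) \<bullet> g\<bar>) < (\<Sum>i\<in>UNIV-M. \<bar>(X $ i) \<bullet> g\<bar>)))"

lemma split_sum:
  fixes X :: "real^'p^'n"
  shows "(\<Sum>i\<in>UNIV. \<bar>(X $ i) \<bullet> g\<bar>) = (\<Sum>i\<in>M. \<bar>(X $ i) \<bullet> g\<bar>) + (\<Sum>i\<in>UNIV-M. \<bar>(X $ i) \<bullet> g\<bar>)"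
  using sum.subset_diff[of M UNIV "\<lambda>i. \<bar>(X $ i) \<bullet> g\<bar>"] by simp

lemma Pk_mono:
  fixes X :: "real^'p^'n"
  assumes "Pk X j" "k \<le> j" "j \<le> CARD('n)"
  shows "Pk X k"
  unfolding Pk_def
proof (intro allI impI)
  fix M :: "'n set" and g :: "real^'p"
  assume M: "card M = k" and g: "g \<noteq> 0"
  have "card (UNIV - M) = CARD('n) - k" using M by (simp add: card_Diff_subset)
  hence jk: "j - k \<le> card (UNIV - M)" using assms by simp
  obtain T where T: "T \<subseteq> UNIV - M" "card T = j - k"
    using obtain_subset_with_card_n[OF jk] by metis
  have "card (M \<union> T) = card M + card T"
    by (rule card_Un_disjoint) (use T in auto)
  hence "card (M \<union> T) = j" using T M assms(2) by simp
  hence lt: "(\<Sum>i\<in>M \<union> T. \<bar>(X $ i) \<bullet> g\<bar>) < (\<Sum>i\<in>UNIV-(M \<union> T). \<bar>(X $ i) \<bullet> g\<bar>)"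
    using assms(1) g unfolding Pk_def by blast
  have "(\<Sum>i\<in>M. \<bar>(X $ i) \<bullet> g\<bar>) \<le> (\<Sum>i\<in>M \<union> T. \<bar>(X $ i) \<bullet> g\<bar>)"
    by (rule sum_mono2) auto
  moreover have "(\<Sum>i\<in>UNIV-(M \<union> T). \<bar>(X $ i) \<bullet> g\<bar>) \<le> (\<Sum>i\<in>UNIV-M. \<bar>(X $ i) \<bullet> g\<bar>)"
    by (rule sum_mono2) auto
  ultimately show "(\<Sum>i\<in>M. \<bar>(X $ i) \<bullet> g\<bar>) < (\<Sum>i\<in>UNIV-M. \<bar>(X $ i) \<bullet> g\<bar>)"
    using lt by linarith
qed

lemma scale_inv:
  fixes X :: "real^'p^'n" and A B :: "'n set"
  assumes "c > 0"
  shows "(\<Sum>i\<in>A. \<bar>(X $ i) \<bullet> (c *\<^sub>R g)\<bar>) / (\<Sum>i\<in>B. \<bar>(X $ i) \<bullet> (c *\<^sub>R g)\<bar>)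
       = (\<Sum>i\<in>A. \<bar>(X $ i) \<bullet> g\<bar>) / (\<Sum>i\<in>B. \<bar>(X $ i) \<bullet> g\<bar>)"
proof -
  have "\<And>i. \<bar>(X $ i) \<bullet> (c *\<^sub>R g)\<bar> = c * \<bar>(X $ i) \<bullet> g\<bar>"
    using assms by (simp add: abs_mult)
  hence "(\<Sum>i\<in>A. \<bar>(X $ i) \<bullet> (c *\<^sub>R g)\<bar>) / (\<Sum>i\<in>B. \<bar>(X $ i) \<bullet> (c *\<^sub>R g)\<bar>)
     = (c * (\<Sum>i\<in>A. \<bar>(X $ i) \<bullet> g\<bar>)) / (c * (\<Sum>i\<in>B. \<bar>(X $ i) \<bullet> g\<bar>))"
    by (simp add: sum_distrib_left)
  also have "\<dots> = (\<Sum>i\<in>A. \<bar>(X $ i) \<bullet> g\<bar>) / (\<Sum>i\<in>B. \<bar>(X $ i) \<bullet> g\<bar>)"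
    using assms by simp
  finally show ?thesis .
qed

lemma ratio_iff:
  fixes X :: "real^'p^'n"
  assumes "rank X = CARD('p)" "g \<noteq> 0"
  shows "1/2 < (\<Sum>i\<in>UNIV - M. \<bar>(X $ i) \<bullet> g\<bar>) / (\<Sum>i\<in>UNIV. \<bar>(X $ i) \<bullet> g\<bar>)
     \<longleftrightarrow> (\<Sum>i\<in>M. \<bar>(X $ i) \<bullet> g\<bar>) < (\<Sum>i\<in>UNIV-M. \<bar>(X $ i) \<bullet> g\<bar>)"
proof -
  have p: "(\<Sum>i\<in>UNIV. \<bar>(X $ i) \<bullet> g\<bar>) > 0" using full_rank_pos[OF assms] .
  note sp = split_sum[of X g M]
  show ?thesis using p unfolding sp by (simp add: field_simps)
qed

lemma inf_iff:
  fixes X :: "real^'p^'n"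
  assumes "rank X = CARD('p)"
  shows "1/2 < (INF g \<in> {g :: real^'p. g \<noteq> 0}.
              (\<Sum>i\<in>UNIV - M. \<bar>(X $ i) \<bullet> g\<bar>) / (\<Sum>i\<in>UNIV. \<bar>(X $ i) \<bullet> g\<bar>))
     \<longleftrightarrow> (\<forall>g::real^'p. g \<noteq> 0 \<longrightarrow> 1/2 < (\<Sum>i\<in>UNIV - M. \<bar>(X $ i) \<bullet> g\<bar>) / (\<Sum>i\<in>UNIV. \<bar>(X $ i) \<bullet> g\<bar>))"
    (is "_ < (INF g \<in> _. ?R g) \<longleftrightarrow> _")
proof
  assume h: "1/2 < (INF g \<in> {g :: real^'p. g \<noteq> 0}. ?R g)"
  have bdd: "bdd_below (?R ` {g. g \<noteq> 0})"
    by (rule bdd_belowI[of _ 0]) (auto intro!: divide_nonneg_nonneg sum_nonneg)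
  show "\<forall>g::real^'p. g \<noteq> 0 \<longrightarrow> 1/2 < ?R g"
  proof (intro allI impI)
    fix g :: "real^'p" assume "g \<noteq> 0"
    hence "(INF g \<in> {g :: real^'p. g \<noteq> 0}. ?R g) \<le> ?R g" by (intro cINF_lower[OF bdd]) auto
    thus "1/2 < ?R g" using h by linarith
  qed
next
  assume h: "\<forall>g::real^'p. g \<noteq> 0 \<longrightarrow> 1/2 < ?R g"
  have ne: "sphere (0::real^'p) 1 \<noteq> {}"
  proof -
    obtain b :: "real^'p" where "b \<in> Basis" by (meson ex_in_conv nonempty_Basis)
    hence "b \<in> sphere 0 1" by simp
    thus ?thesis by blast
  qed
  have c1: "continuous_on (sphere (0::real^'p) 1) (\<lambda>g. (\<Sum>i\<in>UNIV - M. \<bar>(X $ i) \<bullet> g\<bar>))"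
    by (intro continuous_intros)
  have c2: "continuous_on (sphere (0::real^'p) 1) (\<lambda>g. (\<Sum>i\<in>UNIV. \<bar>(X $ i) \<bullet> g\<bar>))"
    by (intro continuous_intros)
  have nz: "\<forall>g\<in>sphere (0::real^'p) 1. (\<Sum>i\<in>UNIV. \<bar>(X $ i) \<bullet> g\<bar>) \<noteq> 0"
  proof
    fix g :: "real^'p" assume "g \<in> sphere 0 1"
    hence "g \<noteq> 0" by auto
    thus "(\<Sum>i\<in>UNIV. \<bar>(X $ i) \<bullet> g\<bar>) \<noteq> 0" using full_rank_pos[OF assms] by force
  qed
  have cont: "continuous_on (sphere (0::real^'p) 1) ?R"
    by (rule continuous_on_divide[OF c1 c2]) (use nz in blast)
  obtain g0 where g0: "g0 \<in> sphere 0 1" "\<And>y. y \<in> sphere 0 1 \<Longrightarrow> ?R g0 \<le> ?R y"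
    using continuous_attains_inf[OF compact_sphere ne cont] by blast
  have g0nz: "g0 \<noteq> 0" using g0(1) by auto
  have "?R g0 \<le> (INF g \<in> {g :: real^'p. g \<noteq> 0}. ?R g)"
  proof (rule cINF_greatest)
    show "{g :: real^'p. g \<noteq> 0} \<noteq> {}" using g0nz by blast
  next
    fix g :: "real^'p" assume "g \<in> {g. g \<noteq> 0}"
    hence gnz: "g \<noteq> 0" by simp
    hence "(inverse (norm g)) *\<^sub>R g \<in> sphere 0 1" by simp
    hence "?R g0 \<le> ?R ((inverse (norm g)) *\<^sub>R g)" by (rule g0(2))
    also have "\<dots> = ?R g" by (rule scale_inv) (use gnz in simp)
    finally show "?R g0 \<le> ?R g" .
  qed
  moreover have "1/2 < ?R g0" using h g0nz by blast
  ultimately show "1/2 < (INF g \<in> {g :: real^'p. g \<noteq> 0}. ?R g)" by linarith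
qed


lemma split_gen:
  fixes h :: "'n::finite \<Rightarrow> real"
  shows "sum h UNIV = sum h M + sum h (UNIV - M)"
  using sum.subset_diff[of M UNIV h] by simp

lemma lev_iff:
  fixes X :: "real^'p^'n"
  assumes "rank X = CARD('p)" "k \<le> CARD('n)"
  shows "1/2 < leverage_const X k \<longleftrightarrow> Pk X k"
proof -
  have fin: "finite {M::'n set. card M = k}" by (rule finite_subset[of _ UNIV]) auto
  obtain M0 :: "'n set" where "M0 \<subseteq> UNIV" "card M0 = k"
    using obtain_subset_with_card_n[of k "UNIV::'n set"] assms(2) by auto
  hence ne: "{M::'n set. card M = k} \<noteq> {}" by blast
  have "1/2 < leverage_const X k \<longleftrightarrow>
     (\<forall>M\<in>{M::'n set. card M = k}. 1/2 < (INF g \<in> {g :: real^'p. g \<noteq> 0}.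
              (\<Sum>i\<in>UNIV - M. \<bar>(X $ i) \<bullet> g\<bar>) / (\<Sum>i\<in>UNIV. \<bar>(X $ i) \<bullet> g\<bar>)))"
    (is "_ \<longleftrightarrow> (\<forall>M\<in>?S. 1/2 < ?F M)")
  proof -
    have "(1/2 < Min (?F ` ?S)) = (\<forall>a\<in>?F ` ?S. 1/2 < a)"
      by (rule Min_gr_iff) (use fin ne in auto)
    thus ?thesis unfolding leverage_const_def by blast
  qed
  also have "\<dots> \<longleftrightarrow> (\<forall>M\<in>{M::'n set. card M = k}. \<forall>g::real^'p. g \<noteq> 0 \<longrightarrow>
      (\<Sum>i\<in>M. \<bar>(X $ i) \<bullet> g\<bar>) < (\<Sum>i\<in>UNIV-M. \<bar>(X $ i) \<bullet> g\<bar>))"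
    using inf_iff[OF assms(1)] ratio_iff[OF assms(1)] by simp
  also have "\<dots> \<longleftrightarrow> Pk X k" unfolding Pk_def by blast
  finally show ?thesis .
qed

lemma mX_iff:
  fixes X :: "real^'p^'n"
  assumes "rank X = CARD('p)" "1 \<le> k" "k \<le> CARD('n)"
  shows "k \<le> mX X \<longleftrightarrow> Pk X k"
proof -
  define S where "S = {k. 1 \<le> k \<and> k \<le> CARD('n) \<and> leverage_const X k > 1/2}"
  have finS: "finite S" unfolding S_def by (rule finite_subset[of _ "{..CARD('n)}"]) auto
  have m: "mX X = (if S = {} then 0 else Max S)" unfolding mX_def S_def Let_def by simp
  show ?thesis
  proof
    assume "k \<le> mX X"
    hence Sne: "S \<noteq> {}" and kj: "k \<le> Max S" using m assms(2) by (auto split: if_splits)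
    have "Max S \<in> S" using finS Sne by simp
    hence j: "1 \<le> Max S" "Max S \<le> CARD('n)" "leverage_const X (Max S) > 1/2" unfolding S_def by auto
    hence "Pk X (Max S)" using lev_iff[OF assms(1) j(2)] by simp
    thus "Pk X k" using Pk_mono kj j(2) by blast
  next
    assume "Pk X k"
    hence "k \<in> S" unfolding S_def using lev_iff[OF assms(1) assms(3)] assms by simp
    hence "S \<noteq> {}" "k \<le> Max S" using finS by auto
    thus "k \<le> mX X" using m by simp
  qed
qed

lemma Pk_strict:
  fixes X :: "real^'p^'n" and e :: "real^'n"
  assumes "Pk X k" "k \<le> CARD('n)" "l0norm e \<le> k" "d \<noteq> 0"
  shows "l1norm e < l1norm (e + X *v d)"
proof -
  define T where "T = {i. e $ i \<noteq> 0}"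
  have cT: "card T \<le> k" using assms(3) unfolding T_def l0norm_def .
  have "card (UNIV - T) = CARD('n) - card T" by (simp add: card_Diff_subset)
  hence jk: "k - card T \<le> card (UNIV - T)" using assms(2) by simp
  obtain U where U: "U \<subseteq> UNIV - T" "card U = k - card T"
    using obtain_subset_with_card_n[OF jk] by metis
  define M where "M = T \<union> U"
  have "card M = card T + card U" unfolding M_def
    by (rule card_Un_disjoint) (use U in auto)
  hence cM: "card M = k" using U cT by simp
  define v where "v = X *v d"
  have lt: "(\<Sum>i\<in>M. \<bar>v $ i\<bar>) < (\<Sum>i\<in>UNIV-M. \<bar>v $ i\<bar>)"
    using assms(1) assms(4) cM unfolding Pk_def v_def by (simp add: mv_comp)
  have eout: "\<And>i. i \<notin> M \<Longrightarrow> e $ i = 0" unfolding M_def T_def by auto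
  have "l1norm e = (\<Sum>i\<in>M. \<bar>e $ i\<bar>) + (\<Sum>i\<in>UNIV-M. \<bar>e $ i\<bar>)"
    unfolding l1norm_def by (rule split_gen)
  also have "(\<Sum>i\<in>UNIV-M. \<bar>e $ i\<bar>) = 0" using eout by simp
  finally have l1: "l1norm e = (\<Sum>i\<in>M. \<bar>e $ i\<bar>)" by simp
  have "l1norm (e + v) = (\<Sum>i\<in>M. \<bar>e $ i + v $ i\<bar>) + (\<Sum>i\<in>UNIV-M. \<bar>e $ i + v $ i\<bar>)"
    unfolding l1norm_def vector_add_component by (rule split_gen)
  also have "(\<Sum>i\<in>UNIV-M. \<bar>e $ i + v $ i\<bar>) = (\<Sum>i\<in>UNIV-M. \<bar>v $ i\<bar>)"
    using eout by (intro sum.cong) auto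
  finally have l2: "l1norm (e + v) = (\<Sum>i\<in>M. \<bar>e $ i + v $ i\<bar>) + (\<Sum>i\<in>UNIV-M. \<bar>v $ i\<bar>)" .
  have "(\<Sum>i\<in>M. \<bar>e $ i\<bar> - \<bar>v $ i\<bar>) \<le> (\<Sum>i\<in>M. \<bar>e $ i + v $ i\<bar>)"
    by (rule sum_mono) linarith
  hence "(\<Sum>i\<in>M. \<bar>e $ i\<bar>) - (\<Sum>i\<in>M. \<bar>v $ i\<bar>) \<le> (\<Sum>i\<in>M. \<bar>e $ i + v $ i\<bar>)"
    by (simp add: sum_subtractf)
  thus ?thesis using l1 l2 lt unfolding v_def by linarith
qed


theorem theorem3p6:
  fixes X :: "real^'p^'n" and f :: "real^'p" and k :: nat
  assumes "CARD('p) < CARD('n)"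
    and "rank X = CARD('p)"
    and "1 \<le> k" and "k \<le> CARD('n)"
  shows "(\<forall>e :: real^'n. l0norm e \<le> k \<longrightarrow>
            {g. \<forall>h. l1norm (X *v f + e - X *v g) \<le> l1norm (X *v f + e - X *v h)} = {f})
         \<longleftrightarrow> k \<le> mX X"
proof -
  have res: "\<And>e h. X *v f + e - X *v h = e + X *v (f - h)"
    by (simp add: matrix_vector_mult_diff_distrib algebra_simps)
  have "(\<forall>e :: real^'n. l0norm e \<le> k \<longrightarrow>
            {g. \<forall>h. l1norm (X *v f + e - X *v g) \<le> l1norm (X *v f + e - X *v h)} = {f})
         \<longleftrightarrow> Pk X k"
  proof
    assume P: "Pk X k"
    show "\<forall>e :: real^'n. l0norm e \<le> k \<longrightarrow>
            {g. \<forall>h. l1norm (X *v f + e - X *v g) \<le> l1norm (X *v f + e - X *v h)} = {f}"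
    proof (intro allI impI)
      fix e :: "real^'n" assume e: "l0norm e \<le> k"
      have st: "\<And>d. d \<noteq> 0 \<Longrightarrow> l1norm e < l1norm (e + X *v d)"
        using Pk_strict[OF P assms(4) e] by blast
      have fmin: "\<And>h. l1norm e \<le> l1norm (e + X *v (f - h))"
      proof -
        fix h show "l1norm e \<le> l1norm (e + X *v (f - h))"
        proof (cases "f - h = 0")
          case True thus ?thesis by simp
        next
          case False thus ?thesis using st[OF False] by simp
        qed
      qed
      show "{g. \<forall>h. l1norm (X *v f + e - X *v g) \<le> l1norm (X *v f + e - X *v h)} = {f}"
      proof (intro set_eqI iffI)
        fix g assume "g \<in> {g. \<forall>h. l1norm (X *v f + e - X *v g) \<le> l1norm (X *v f + e - X *v h)}"
        hence "l1norm (e + X *v (f - g)) \<le> l1norm (e + X *v (f - f))" unfolding res by blast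
        hence "\<not> l1norm e < l1norm (e + X *v (f - g))" by simp
        hence "f - g = 0" using st by blast
        thus "g \<in> {f}" by simp
      next
        fix g assume "g \<in> {f}"
        hence "g = f" by simp
        thus "g \<in> {g. \<forall>h. l1norm (X *v f + e - X *v g) \<le> l1norm (X *v f + e - X *v h)}"
          unfolding res using fmin by simp
      qed
    qed
  next
    assume A: "\<forall>e :: real^'n. l0norm e \<le> k \<longrightarrow>
            {g. \<forall>h. l1norm (X *v f + e - X *v g) \<le> l1norm (X *v f + e - X *v h)} = {f}"
    show "Pk X k" unfolding Pk_def
    proof (intro allI impI)
      fix M :: "'n set" and g :: "real^'p"
      assume M: "card M = k" and g: "g \<noteq> 0"
      define v where "v = X *v g"
      define e :: "real^'n" where "e = (\<chi> i. if i \<in> M then v $ i else 0)"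
      have "{i. e $ i \<noteq> 0} \<subseteq> M" unfolding e_def by auto
      hence "l0norm e \<le> k" unfolding l0norm_def using M card_mono[OF finite] by metis
      hence Seq: "{g. \<forall>h. l1norm (X *v f + e - X *v g) \<le> l1norm (X *v f + e - X *v h)} = {f}"
        using A by blast
      have "f \<in> {g. \<forall>h. l1norm (X *v f + e - X *v g) \<le> l1norm (X *v f + e - X *v h)}"
        using Seq by blast
      hence fmin: "\<And>h. l1norm e \<le> l1norm (X *v f + e - X *v h)" by simp
      have "f + g \<notin> {g. \<forall>h. l1norm (X *v f + e - X *v g) \<le> l1norm (X *v f + e - X *v h)}"
        using Seq g by auto
      then obtain h where "l1norm (X *v f + e - X *v (f + g)) > l1norm (X *v f + e - X *v h)"
        by (auto simp: not_le)
      with fmin[of h] have lt: "l1norm e < l1norm (X *v f + e - X *v (f + g))" by linarith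
      have r: "X *v f + e - X *v (f + g) = e - v"
        unfolding v_def by (simp add: matrix_vector_right_distrib)
      have l1: "l1norm e = (\<Sum>i\<in>M. \<bar>v $ i\<bar>)"
      proof -
        have "l1norm e = (\<Sum>i\<in>M. \<bar>e $ i\<bar>) + (\<Sum>i\<in>UNIV-M. \<bar>e $ i\<bar>)"
          unfolding l1norm_def by (rule split_gen)
        thus ?thesis unfolding e_def by simp
      qed
      have l2: "l1norm (e - v) = (\<Sum>i\<in>UNIV-M. \<bar>v $ i\<bar>)"
      proof -
        have "l1norm (e - v) = (\<Sum>i\<in>M. \<bar>(e - v) $ i\<bar>) + (\<Sum>i\<in>UNIV-M. \<bar>(e - v) $ i\<bar>)"
          unfolding l1norm_def by (rule split_gen)
        thus ?thesis unfolding e_def by simp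
      qed
      show "(\<Sum>i\<in>M. \<bar>(X $ i) \<bullet> g\<bar>) < (\<Sum>i\<in>UNIV-M. \<bar>(X $ i) \<bullet> g\<bar>)"
      proof -
        have "(\<Sum>i\<in>M. \<bar>v $ i\<bar>) < (\<Sum>i\<in>UNIV-M. \<bar>v $ i\<bar>)"
          using lt unfolding r l1 l2 .
        thus ?thesis unfolding v_def mv_comp .
      qed
    qed
  qed
  also have "\<dots> \<longleftrightarrow> k \<le> mX X" using mX_iff[OF assms(2) assms(3) assms(4)] by simp
  finally show ?thesis .
qed

end
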